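(* Let $\mu>0$ and let $f:[0,1]\to\mathbb{R}$ be bounded. Then $\lim_{n\to+\infty}\mathscr{L}_n^K f(x)=f(x)$ at every point $x\in[0,1]$ at which $f$ is continuous. Moreover, for every $f\in C([0,1])$, $\mathscr{L}_n^K f(x)\to f(x)$ as $n\to+\infty$ uniformly for $x\in[0,1]$.
   Context: Fix $\mu>0$. Let $\ln_\mu(x):=\ln(1+\mu+x)$ for $x\in[0,1]$, and for $f:[0,1]\to\mathbb{R}$ let $f_\mu(x):=f(x)/\ln_\mu(x)$. Let $p_{n,k}(y):=\binom{n}{k}y^k(1-y)^{n-k}$ and $a_{n+1}(x):=\dfrac{\ln\left(1+\frac{x}{(n+1)(1+\mu)}\right)}{\ln\left(1+\frac{1}{(n+1)(1+\mu)}\right)}$, $x\in[0,1]$. For $n\in\mathbb{N}$ define $\mathscr{L}_n^K f(x):=\ln_\mu(x)\sum_{k=0}^n p_{n,k}(a_{n+1}(x))\,(n+1)\int_{k/(n+1)}^{(k+1)/(n+1)} f_\mu(t)\,dt$, $x\in[0,1]$. *)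

theory Defs
  imports "HOL-Analysis.Analysis"
begin

definition ln_mu :: "real \<Rightarrow> real \<Rightarrow> real" where
  "ln_mu \<mu> x = ln (1 + \<mu> + x)"

definition f_mu :: "real \<Rightarrow> (real \<Rightarrow> real) \<Rightarrow> real \<Rightarrow> real" where
  "f_mu \<mu> f x = f x / ln_mu \<mu> x"

definition bern :: "nat \<Rightarrow> nat \<Rightarrow> real \<Rightarrow> real" where
  "bern n k y = real (n choose k) * y ^ k * (1 - y) ^ (n - k)"

definition a_seq :: "real \<Rightarrow> nat \<Rightarrow> real \<Rightarrow> real" where
  "a_seq \<mu> m x = ln (1 + x / (real m * (1 + \<mu>))) / ln (1 + 1 / (real m * (1 + \<mu>)))"

definition KL :: "real \<Rightarrow> nat \<Rightarrow> (real \<Rightarrow> real) \<Rightarrow> real \<Rightarrow> real" where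
  "KL \<mu> n f x = ln_mu \<mu> x * (\<Sum>k=0..n. bern n k (a_seq \<mu> (n+1) x) *
      (real (n+1) * integral {real k / real (n+1) .. real (k+1) / real (n+1)} (f_mu \<mu> f)))"

end

theory Submission
  imports Defs
begin

lemma a_seq_bounds:
  assumes mu: "\<mu> > 0" and m: "m \<ge> 2" and x: "0 \<le> x" "x \<le> 1"
  shows "0 \<le> a_seq \<mu> m x \<and> a_seq \<mu> m x \<le> 1 \<and> \<bar>a_seq \<mu> m x - x\<bar> \<le> 2 / real m"
proof -
  define t where "t = 1 / (real m * (1 + \<mu>))"
  have mpos: "real m \<ge> 2" using m by simp
  have t0: "0 < t" using mu m by (simp add: t_def)
  have mm: "real m * 1 \<le> real m * (1 + \<mu>)" using mu by (intro mult_left_mono) auto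
  hence mm: "real m \<le> real m * (1 + \<mu>)" by simp
  have "real m * (1 + \<mu>) \<ge> 2" using mpos mm by linarith
  hence th: "t \<le> 1/2" unfolding t_def by (simp add: field_simps)
  have tm: "t \<le> 1 / real m" unfolding t_def using mpos mm by (intro frac_le) auto
  have a: "a_seq \<mu> m x = ln (1 + t * x) / ln (1 + t)"
    by (simp add: a_seq_def t_def)
  have L1: "ln (1 + t) > 0" using t0 by simp
  have L1l: "t - t^2 \<le> ln (1 + t)" using ln_one_plus_pos_lower_bound[of t] t0 th by simp
  have Lxu: "ln (1 + t*x) \<le> t * x" using ln_add_one_self_le_self[of "t*x"] t0 x by simp
  have Lxl: "t*x - (t*x)^2 \<le> ln (1 + t*x)"
    using ln_one_plus_pos_lower_bound[of "t*x"] t0 th x by (simp add: mult_le_one)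
  have L0: "0 \<le> ln (1 + t*x)" using t0 x by simp
  have tx: "t*x \<le> t" using t0 x by (simp add: mult_left_le)
  have tx0: "0 \<le> t*x" using t0 x by simp
  have Lm: "ln (1 + t*x) \<le> ln (1 + t)" using tx tx0 by (subst ln_le_cancel_iff) auto
  have "0 \<le> a_seq \<mu> m x" using a L0 L1 by simp
  moreover have "a_seq \<mu> m x \<le> 1" using a Lm L1 by simp
  moreover have "a_seq \<mu> m x \<le> x + 2 * t"
  proof -
    have "ln (1 + t*x) \<le> t * x" by (rule Lxu)
    also have "\<dots> \<le> (x + 2*t) * (t - t^2)"
    proof -
      have e: "(x + 2*t) * (t - t^2) - t*x = t * (2 - x - 2*t) * t" by (simp add: algebra_simps power2_eq_square)
      have "t * (2 - x - 2*t) * t \<ge> 0" using t0 th x by (intro mult_nonneg_nonneg) auto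
      then show ?thesis using e by linarith
    qed
    also have "\<dots> \<le> (x + 2*t) * ln (1 + t)" using L1l t0 x by (intro mult_left_mono) auto
    finally show ?thesis using a L1 by (simp add: divide_le_eq)
  qed
  moreover have "x - t \<le> a_seq \<mu> m x"
  proof -
    have "(x - t) * ln (1 + t) \<le> ln (1 + t*x)"
    proof (cases "x \<le> t")
      case True
      then have "(x - t) * ln (1 + t) \<le> 0" using L1 by (simp add: mult_nonpos_nonneg)
      then show ?thesis using L0 by linarith
    next
      case False
      have "(x - t) * ln (1 + t) \<le> (x - t) * t"
        using ln_add_one_self_le_self[of t] t0 False by (intro mult_left_mono) auto
      moreover have "x^2 \<le> 1" using x by (simp add: power_le_one)
      hence "t^2 * x^2 \<le> t^2" by (simp add: mult_left_le)
      hence "(x - t) * t \<le> t*x - (t*x)^2" by (simp add: algebra_simps power2_eq_square power_mult_distrib)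
      ultimately show ?thesis using Lxl by linarith
    qed
    then show ?thesis using a L1 by (simp add: le_divide_eq)
  qed
  ultimately show ?thesis using tm by (auto simp: abs_le_iff)
qed


lemma sum_bern_var:
  assumes n: "n > 0"
  shows "(\<Sum>k\<le>n. (x - k/n)\<^sup>2 * Bernstein n k x) = x * (1 - x) / n"
proof -
  have *: "\<And>a b x::real. (a - b)\<^sup>2 * x = a * (a - 1) * x + (1 - 2 * b) * a * x + b * b * x"
    by (simp add: algebra_simps power2_eq_square)
  have "(\<Sum>k\<le>n. (k - n * x)\<^sup>2 * Bernstein n k x) = n * x * (1 - x)"
    apply (simp add: * sum.distrib)
    apply (simp flip: sum_distrib_left add: mult.assoc)
    apply (simp add: algebra_simps power2_eq_square)
    done
  then have "(\<Sum>k\<le>n. (k - n * x)\<^sup>2 * Bernstein n k x)/n^2 = x * (1 - x) / n"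
    by (simp add: power2_eq_square)
  then show ?thesis
    using n by (simp add: sum_divide_distrib field_split_simps power2_commute)
qed

lemma bern_Bernstein: "bern = Bernstein"
  by (intro ext) (simp add: bern_def Bernstein_def)

lemma kant_est:
  fixes h :: "real \<Rightarrow> real"
  assumes hint: "h integrable_on {0..1}"
    and M: "\<forall>t\<in>{0..1}. \<bar>h t\<bar> \<le> M"
    and x0: "0 \<le> x0" "x0 \<le> 1" and eps: "\<epsilon> \<ge> 0" and del: "\<delta> > 0"
    and cont: "\<forall>t\<in>{0..1}. \<bar>t - x0\<bar> < \<delta> \<longrightarrow> \<bar>h t - h x0\<bar> \<le> \<epsilon>"
    and n: "real n > 8/\<delta>" and y: "0 \<le> y" "y \<le> 1" and yx: "\<bar>y - x0\<bar> < \<delta>/4"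
  shows "\<bar>(\<Sum>k=0..n. bern n k y * (real (n+1) * integral {real k / real (n+1) .. real (k+1) / real (n+1)} h)) - h x0\<bar>
          \<le> \<epsilon> + 8*M/(\<delta>^2 * real n)"
proof -
  define m where "m = real (n+1)"
  define A where "A k = m * integral {real k / m .. real (k+1) / m} h" for k
  have M0: "M \<ge> 0" using M x0 by force
  have npos: "real n > 0" using n del by (smt (verit) divide_pos_pos)
  hence n0: "n > 0" by simp
  have m0: "m > 0" by (simp add: m_def)
  have mn: "m = real n + 1" by (simp add: m_def)
  have "8/\<delta> < m" using n mn by linarith
  hence "8 < m * \<delta>" using del by (simp add: divide_less_eq mult.commute)
  hence im: "1/m < \<delta>/8" using m0 del by (simp add: divide_less_eq field_simps)
  have cont_I: "measure lborel {real k / m .. real (k+1) / m} = 1/m" for k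
    using m0 by (simp add: field_simps)
  have intk: "h integrable_on {real k / m .. real (k+1) / m}" if "k \<le> n" for k
  proof (rule integrable_on_subinterval[OF hint])
    have "real (k+1) \<le> m" using that mn by simp
    hence "real (k+1) / m \<le> 1" using m0 by simp
    then show "{real k / m .. real (k+1) / m} \<subseteq> {0..1}" using m0 by auto
  qed
  have Isub: "{real k / m .. real (k+1) / m} \<subseteq> {0..1}" if "k \<le> n" for k
  proof -
    have "real (k+1) \<le> m" using that mn by simp
    hence "real (k+1) / m \<le> 1" using m0 by simp
    then show ?thesis using m0 by auto
  qed
  have Abound: "\<bar>A k\<bar> \<le> M" if "k \<le> n" for k
  proof -
    have "norm (integral {real k / m .. real (k+1) / m} h) \<le> M * measure lborel (cbox (real k / m) (real (k+1) / m))"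
      apply (rule has_integral_bound[OF M0])
      using intk[OF that] apply (simp add: integrable_integral)
      using M Isub[OF that] by auto
    hence "\<bar>integral {real k / m .. real (k+1) / m} h\<bar> \<le> M / m" using cont_I by simp
    then show ?thesis using m0 by (simp add: A_def abs_mult field_simps)
  qed
  have Aclose: "\<bar>A k - h x0\<bar> \<le> \<epsilon>" if k: "k \<le> n" and yk: "\<bar>y - real k / real n\<bar> < \<delta>/4" for k
  proof -
    have kn: "real k / real n \<le> 1" using k npos by simp
    have e1: "real k / real n - real k / m = (real k / real n) / m"
      using npos m0 mn by (simp add: field_simps)
    have "(real k / real n) / m \<le> 1 / m" by (rule divide_right_mono[OF kn]) (use m0 in simp)
    hence kk: "\<bar>real k / real n - real k / m\<bar> \<le> 1/m" using e1 npos m0 by simp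
    have close: "\<bar>h t - h x0\<bar> \<le> \<epsilon>" if t: "t \<in> {real k / m .. real (k+1) / m}" for t
    proof -
      have "real (k+1) / m = real k / m + 1/m" by (simp add: add_divide_distrib)
      hence "\<bar>t - real k / m\<bar> \<le> 1/m" using t by auto
      hence "\<bar>t - x0\<bar> < \<delta>" using kk yk yx im by linarith
      then show ?thesis using cont Isub[OF k] t by auto
    qed
    have hi: "((\<lambda>t. h t - h x0) has_integral (integral {real k / m .. real (k+1) / m} h - (1/m) * h x0))
               {real k / m .. real (k+1) / m}"
    proof -
      have "((\<lambda>t. h x0) has_integral (measure lborel {real k / m .. real (k+1) / m} *\<^sub>R h x0)) {real k / m .. real (k+1) / m}"
        using has_integral_const_real by blast
      then show ?thesis using has_integral_diff[OF integrable_integral[OF intk[OF k]]] cont_I by force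
    qed
    have "norm (integral {real k / m .. real (k+1) / m} h - (1/m) * h x0) \<le> \<epsilon> * measure lborel (cbox (real k / m) (real (k+1) / m))"
      apply (rule has_integral_bound[OF eps])
      using hi apply simp
      using close by auto
    hence "\<bar>integral {real k / m .. real (k+1) / m} h - (1/m) * h x0\<bar> \<le> \<epsilon> / m" using cont_I by simp
    hence "m * \<bar>integral {real k / m .. real (k+1) / m} h - (1/m) * h x0\<bar> \<le> m * (\<epsilon> / m)" using m0
      by (intro mult_left_mono) auto
    hence "\<bar>m * (integral {real k / m .. real (k+1) / m} h - (1/m) * h x0)\<bar> \<le> \<epsilon>" using m0
      by (simp add: abs_mult)
    moreover have "m * (integral {real k / m .. real (k+1) / m} h - (1/m) * h x0) = A k - h x0"
      using m0 by (simp add: A_def algebra_simps)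
    ultimately show ?thesis by simp
  qed
  define C where "C = 32 * M / \<delta>^2"
  have C0: "C \<ge> 0" using M0 by (simp add: C_def)
  have each: "\<bar>A k - h x0\<bar> \<le> \<epsilon> + C * (y - real k / real n)\<^sup>2" if k: "k \<le> n" for k
  proof (cases "\<bar>y - real k / real n\<bar> < \<delta>/4")
    case True
    then show ?thesis using Aclose[OF k] C0 by (smt (verit) mult_nonneg_nonneg zero_le_power2)
  next
    case False
    hence "(\<delta>/4)^2 \<le> \<bar>y - real k / real n\<bar>^2" using del by (intro power_mono) auto
    hence d2: "\<delta>^2 / 16 \<le> (y - real k / real n)\<^sup>2" by (simp add: power_divide)
    have "C * (\<delta>^2/16) = 2 * M" using del by (simp add: C_def field_simps)
    moreover have "C * (\<delta>^2/16) \<le> C * (y - real k / real n)\<^sup>2" using d2 C0 by (rule mult_left_mono)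
    moreover have "\<bar>A k - h x0\<bar> \<le> 2 * M" using Abound[OF k] M x0 by (smt (verit) atLeastAtMost_iff)
    ultimately show ?thesis using eps by linarith
  qed
  have B0: "0 \<le> Bernstein n k y" for k using y by (rule Bernstein_nonneg)
  have "(\<Sum>k=0..n. bern n k y * (real (n+1) * integral {real k / real (n+1) .. real (k+1) / real (n+1)} h)) - h x0
        = (\<Sum>k\<le>n. Bernstein n k y * A k) - (\<Sum>k\<le>n. Bernstein n k y) * h x0"
    by (simp add: A_def m_def bern_Bernstein atLeast0AtMost)
  also have "\<dots> = (\<Sum>k\<le>n. Bernstein n k y * (A k - h x0))"
  proof -
    have "(\<Sum>k\<le>n. Bernstein n k y * (A k - h x0)) = (\<Sum>k\<le>n. Bernstein n k y * A k) - (\<Sum>k\<le>n. Bernstein n k y * h x0)"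
      by (simp add: right_diff_distrib sum_subtractf)
    moreover have "(\<Sum>k\<le>n. Bernstein n k y * h x0) = (\<Sum>k\<le>n. Bernstein n k y) * h x0"
      by (rule sum_distrib_right[symmetric])
    ultimately show ?thesis by simp
  qed
  finally have eq: "(\<Sum>k=0..n. bern n k y * (real (n+1) * integral {real k / real (n+1) .. real (k+1) / real (n+1)} h)) - h x0
        = (\<Sum>k\<le>n. Bernstein n k y * (A k - h x0))" .
  have "\<bar>\<Sum>k\<le>n. Bernstein n k y * (A k - h x0)\<bar> \<le> (\<Sum>k\<le>n. \<bar>Bernstein n k y * (A k - h x0)\<bar>)"
    by (rule sum_abs)
  also have "\<dots> \<le> (\<Sum>k\<le>n. Bernstein n k y * (\<epsilon> + C * (y - real k / real n)\<^sup>2))"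
    using each B0 by (intro sum_mono) (simp add: abs_mult mult_left_mono)
  also have "\<dots> = \<epsilon> * (\<Sum>k\<le>n. Bernstein n k y) + C * (\<Sum>k\<le>n. (y - real k / real n)\<^sup>2 * Bernstein n k y)"
  proof -
    have "(\<Sum>k\<le>n. Bernstein n k y * (\<epsilon> + C * (y - real k / real n)\<^sup>2))
        = (\<Sum>k\<le>n. \<epsilon> * Bernstein n k y + C * ((y - real k / real n)\<^sup>2 * Bernstein n k y))"
      by (rule sum.cong) (simp_all add: algebra_simps)
    also have "\<dots> = (\<Sum>k\<le>n. \<epsilon> * Bernstein n k y) + (\<Sum>k\<le>n. C * ((y - real k / real n)\<^sup>2 * Bernstein n k y))"
      by (rule sum.distrib)
    also have "\<dots> = \<epsilon> * (\<Sum>k\<le>n. Bernstein n k y) + C * (\<Sum>k\<le>n. (y - real k / real n)\<^sup>2 * Bernstein n k y)"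
      by (simp only: sum_distrib_left)
    finally show ?thesis .
  qed
  also have "\<dots> = \<epsilon> + C * (y * (1 - y) / real n)"
    using sum_bern_var[OF n0, of y] by simp
  also have "\<dots> \<le> \<epsilon> + C * ((1/4) / real n)"
  proof -
    have "y * (1 - y) = 1/4 - (y - 1/2)\<^sup>2" by (simp add: power2_eq_square algebra_simps)
    moreover have "0 \<le> (y - 1/2)\<^sup>2" by simp
    ultimately have "y * (1 - y) \<le> 1/4" by linarith
    hence "y * (1 - y) / real n \<le> (1/4) / real n" by (rule divide_right_mono) (use npos in simp)
    then show ?thesis using mult_left_mono[OF _ C0] by (smt (verit))
  qed
  also have "\<dots> = \<epsilon> + 8*M/(\<delta>^2 * real n)" by (simp add: C_def field_simps)
  finally show ?thesis using eq by simp
qed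


lemma ev_bound:
  assumes d: "\<delta> > 0" and c: "c > 0"
  shows "eventually (\<lambda>n. real n > 8/\<delta> \<and> K/(\<delta>^2 * real n) < c) sequentially"
proof -
  have e1: "eventually (\<lambda>n. real n > 8/\<delta>) sequentially"
  proof (rule eventually_sequentiallyI[of "nat \<lceil>8/\<delta>\<rceil> + 1"])
    fix n assume "nat \<lceil>8/\<delta>\<rceil> + 1 \<le> n"
    hence "real (nat \<lceil>8/\<delta>\<rceil>) + 1 \<le> real n" by linarith
    moreover have "8/\<delta> \<le> real (nat \<lceil>8/\<delta>\<rceil>)" by (rule real_nat_ceiling_ge)
    ultimately show "real n > 8/\<delta>" by linarith
  qed
  have "(\<lambda>n. (K/\<delta>^2) / of_nat n) \<longlonglongrightarrow> (0::real)" by (rule lim_const_over_n)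
  hence "eventually (\<lambda>n. (K/\<delta>^2) / real n < c) sequentially"
    using c by (rule order_tendstoD(2))
  hence e2: "eventually (\<lambda>n. K/(\<delta>^2 * real n) < c) sequentially" by simp
  show ?thesis using e1 e2 by (rule eventually_conj)
qed

lemma Lbounds:
  assumes mu: "\<mu> > 0" and x: "0 \<le> x" "x \<le> 1"
  shows "ln (1 + \<mu>) \<le> ln_mu \<mu> x \<and> ln_mu \<mu> x \<le> ln (2 + \<mu>) \<and> 0 < ln (1 + \<mu>)"
  using mu x by (simp add: ln_mu_def)

lemma KL_est:
  fixes f :: "real \<Rightarrow> real"
  assumes mu: "\<mu> > 0" and B: "\<forall>x\<in>{0..1}. \<bar>f x\<bar> \<le> B" and intf: "f integrable_on {0..1}"
    and x0: "0 \<le> x0" "x0 \<le> 1" and eps: "\<epsilon> \<ge> 0" and del: "\<delta> > 0"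
    and cont: "\<forall>t\<in>{0..1}. \<bar>t - x0\<bar> < \<delta> \<longrightarrow> \<bar>f_mu \<mu> f t - f_mu \<mu> f x0\<bar> \<le> \<epsilon>"
    and n: "real n > 8/\<delta>"
  shows "\<bar>KL \<mu> n f x0 - f x0\<bar> \<le> ln_mu \<mu> x0 * (\<epsilon> + 8*(B / ln (1+\<mu>))/(\<delta>^2 * real n))"
proof -
  define L where "L = ln_mu \<mu>"
  define h where "h = f_mu \<mu> f"
  have l1: "ln (1+\<mu>) > 0" using mu by simp
  have B0: "B \<ge> 0" using B x0 by force
  have Lc: "continuous_on {0..1} L" unfolding L_def ln_mu_def using mu
    by (intro continuous_intros) auto
  have Lp: "L x \<ge> ln (1+\<mu>)" if "x \<in> {0..1}" for x using Lbounds[OF mu] that by (auto simp: L_def)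
  have hM: "\<forall>t\<in>{0..1}. \<bar>h t\<bar> \<le> B / ln (1+\<mu>)"
  proof
    fix t :: real assume t: "t \<in> {0..1}"
    have "\<bar>h t\<bar> = \<bar>f t\<bar> / L t" using Lp[OF t] l1 by (simp add: h_def f_mu_def L_def abs_div)
    also have "\<dots> \<le> B / L t" using B t Lp[OF t] l1 by (intro divide_right_mono) auto
    also have "\<dots> \<le> B / ln (1+\<mu>)" using B0 Lp[OF t] l1 by (intro divide_left_mono) auto
    finally show "\<bar>h t\<bar> \<le> B / ln (1+\<mu>)" .
  qed
  have hint: "h integrable_on {0..1}"
  proof -
    have fa: "f absolutely_integrable_on {0..1}"
      by (rule absolutely_integrable_integrable_bound[where g="\<lambda>_. B"]) (use B intf in auto)
    have ic: "continuous_on {0..1} (\<lambda>x. 1 / L x)"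
      using Lc Lp l1 by (intro continuous_intros) force+
    have "(\<lambda>x. 1 / L x) \<in> borel_measurable (lebesgue_on {0..1})"
      by (rule continuous_imp_measurable_on_sets_lebesgue[OF ic]) auto
    moreover have "bounded ((\<lambda>x. 1 / L x) ` {0..1})"
      by (rule compact_imp_bounded, rule compact_continuous_image[OF ic]) auto
    ultimately have "(\<lambda>x. 1 / L x * f x) absolutely_integrable_on {0..1}"
      using fa by (intro absolutely_integrable_bounded_measurable_product_real) auto
    moreover have "(\<lambda>x. 1 / L x * f x) = h" by (auto simp: h_def f_mu_def L_def)
    ultimately show ?thesis by (simp add: absolutely_integrable_on_def)
  qed
  define y where "y = a_seq \<mu> (n+1) x0"
  have npos: "real n > 0" using n del by (smt (verit) divide_pos_pos)
  have "n + 1 \<ge> 2" using npos by simp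
  from a_seq_bounds[OF mu this x0] have y: "0 \<le> y" "y \<le> 1" "\<bar>y - x0\<bar> \<le> 2 / real (n+1)"
    by (auto simp: y_def)
  have "8/\<delta> < real (n+1)" using n by simp
  hence "8 < real (n+1) * \<delta>" using del by (simp add: divide_less_eq mult.commute)
  hence "2 / real (n+1) < \<delta>/4" by (simp add: divide_less_eq field_simps)
  hence yx: "\<bar>y - x0\<bar> < \<delta>/4" using y by linarith
  have est: "\<bar>(\<Sum>k=0..n. bern n k y * (real (n+1) * integral {real k / real (n+1) .. real (k+1) / real (n+1)} h)) - h x0\<bar>
          \<le> \<epsilon> + 8*(B / ln (1+\<mu>))/(\<delta>^2 * real n)"
    by (rule kant_est[OF hint hM x0 eps del _ n y(1,2) yx]) (use cont in \<open>simp add: h_def\<close>)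
  have Lx0: "L x0 > 0" using Lp[of x0] x0 l1 by auto
  have "KL \<mu> n f x0 - f x0 = L x0 * ((\<Sum>k=0..n. bern n k y * (real (n+1) * integral {real k / real (n+1) .. real (k+1) / real (n+1)} h)) - h x0)"
    using Lx0 by (simp add: KL_def L_def h_def y_def f_mu_def right_diff_distrib)
  hence "\<bar>KL \<mu> n f x0 - f x0\<bar> = L x0 * \<bar>(\<Sum>k=0..n. bern n k y * (real (n+1) * integral {real k / real (n+1) .. real (k+1) / real (n+1)} h)) - h x0\<bar>"
    using Lx0 by (simp add: abs_mult)
  also have "\<dots> \<le> L x0 * (\<epsilon> + 8*(B / ln (1+\<mu>))/(\<delta>^2 * real n))"
    using est Lx0 by (intro mult_left_mono) auto
  finally show ?thesis by (simp add: L_def)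
qed


theorem theorem3p1:
  fixes \<mu> :: real and f g :: "real \<Rightarrow> real"
  assumes mu: "\<mu> > 0"
    and bdd: "bounded (f ` {0..1})"
    and intf: "f integrable_on {0..1}"
    and contg: "continuous_on {0..1} g"
  shows "(\<forall>x\<in>{0..1}. continuous (at x within {0..1}) f \<longrightarrow> (\<lambda>n. KL \<mu> n f x) \<longlonglongrightarrow> f x)
       \<and> uniform_limit {0..1} (\<lambda>n x. KL \<mu> n g x) g sequentially"
proof
  have l1: "ln (1+\<mu>) > 0" using mu by simp
  have fmu_eq: "f_mu \<mu> F = (\<lambda>x. F x / ln (1 + \<mu> + x))" for F
    by (rule ext) (simp add: f_mu_def ln_mu_def)
  show "\<forall>x\<in>{0..1}. continuous (at x within {0..1}) f \<longrightarrow> (\<lambda>n. KL \<mu> n f x) \<longlonglongrightarrow> f x"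
  proof (intro ballI impI)
    fix x0 :: real assume x0: "x0 \<in> {0..1}" and cf: "continuous (at x0 within {0..1}) f"
    obtain B where B: "\<forall>x\<in>{0..1}. \<bar>f x\<bar> \<le> B" using bdd by (auto simp: bounded_iff)
    have ch: "continuous (at x0 within {0..1}) (f_mu \<mu> f)"
      unfolding fmu_eq using x0 mu
      by (intro continuous_intros cf) auto
    have Lx0: "ln_mu \<mu> x0 > 0" using Lbounds[OF mu] x0 l1 by force
    show "(\<lambda>n. KL \<mu> n f x0) \<longlonglongrightarrow> f x0"
      unfolding tendsto_iff
    proof (intro allI impI)
      fix r :: real assume r: "r > 0"
      define c where "c = r / (2 * ln_mu \<mu> x0)"
      have c: "c > 0" using r Lx0 by (simp add: c_def)
      obtain \<delta> where d: "\<delta> > 0" and dd: "\<forall>x'\<in>{0..1}. dist x' x0 < \<delta> \<longrightarrow> dist (f_mu \<mu> f x') (f_mu \<mu> f x0) < c"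
        using ch c unfolding continuous_within_eps_delta by blast
      have cont: "\<forall>t\<in>{0..1}. \<bar>t - x0\<bar> < \<delta> \<longrightarrow> \<bar>f_mu \<mu> f t - f_mu \<mu> f x0\<bar> \<le> c"
        using dd by (auto simp: dist_real_def intro: less_imp_le)
      show "\<forall>\<^sub>F n in sequentially. dist (KL \<mu> n f x0) (f x0) < r"
        using ev_bound[OF d c, of "8*(B / ln (1+\<mu>))"]
      proof (rule eventually_mono)
        fix n assume n: "real n > 8/\<delta> \<and> 8*(B / ln (1+\<mu>))/(\<delta>^2 * real n) < c"
        have "\<bar>KL \<mu> n f x0 - f x0\<bar> \<le> ln_mu \<mu> x0 * (c + 8*(B / ln (1+\<mu>))/(\<delta>^2 * real n))"
          using KL_est[OF mu B intf _ _ _ d cont] x0 c n by auto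
        also have "\<dots> < ln_mu \<mu> x0 * (c + c)"
          using n Lx0 by (intro mult_strict_left_mono) auto
        also have "\<dots> = r" using Lx0 by (simp add: c_def)
        finally show "dist (KL \<mu> n f x0) (f x0) < r" by (simp add: dist_real_def)
      qed
    qed
  qed
next
  have l1: "ln (1+\<mu>) > 0" using mu by simp
  have l2: "ln (2+\<mu>) > 0" using mu by simp
  have fmu_eq: "f_mu \<mu> F = (\<lambda>x. F x / ln (1 + \<mu> + x))" for F
    by (rule ext) (simp add: f_mu_def ln_mu_def)
  have "bounded (g ` {0..1})"
    by (rule compact_imp_bounded, rule compact_continuous_image[OF contg]) auto
  then obtain B where B: "\<forall>x\<in>{0..1}. \<bar>g x\<bar> \<le> B" by (auto simp: bounded_iff)
  have intg: "g integrable_on {0..1}" by (rule integrable_continuous_interval[OF contg])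
  have ch: "continuous_on {0..1} (f_mu \<mu> g)"
    unfolding fmu_eq using mu
    by (intro continuous_intros contg) auto
  have uc: "uniformly_continuous_on {0..1} (f_mu \<mu> g)"
    by (rule compact_uniformly_continuous[OF ch]) auto
  show "uniform_limit {0..1} (\<lambda>n x. KL \<mu> n g x) g sequentially"
    unfolding uniform_limit_iff
  proof (intro allI impI)
    fix r :: real assume r: "r > 0"
    define c where "c = r / (2 * ln (2 + \<mu>))"
    have c: "c > 0" using r l2 by (simp add: c_def)
    obtain \<delta> where d: "\<delta> > 0" and dd: "\<forall>x\<in>{0..1}. \<forall>x'\<in>{0..1}. dist x' x < \<delta> \<longrightarrow> dist (f_mu \<mu> g x') (f_mu \<mu> g x) < c"
      using uc c unfolding uniformly_continuous_on_def by blast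
    show "\<forall>\<^sub>F n in sequentially. \<forall>x\<in>{0..1}. dist (KL \<mu> n g x) (g x) < r"
      using ev_bound[OF d c, of "8*(B / ln (1+\<mu>))"]
    proof (rule eventually_mono)
      fix n assume n: "real n > 8/\<delta> \<and> 8*(B / ln (1+\<mu>))/(\<delta>^2 * real n) < c"
      show "\<forall>x\<in>{0..1}. dist (KL \<mu> n g x) (g x) < r"
      proof
        fix x0 :: real assume x0: "x0 \<in> {0..1}"
        have Lx0: "ln_mu \<mu> x0 > 0" "ln_mu \<mu> x0 \<le> ln (2 + \<mu>)" using Lbounds[OF mu] x0 l1 by force+
        have cont: "\<forall>t\<in>{0..1}. \<bar>t - x0\<bar> < \<delta> \<longrightarrow> \<bar>f_mu \<mu> g t - f_mu \<mu> g x0\<bar> \<le> c"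
          using dd x0 by (auto simp: dist_real_def intro: less_imp_le)
        have "\<bar>KL \<mu> n g x0 - g x0\<bar> \<le> ln_mu \<mu> x0 * (c + 8*(B / ln (1+\<mu>))/(\<delta>^2 * real n))"
          using KL_est[OF mu B intg _ _ _ d cont] x0 c n by auto
        also have "\<dots> < ln_mu \<mu> x0 * (c + c)"
          using n Lx0 by (intro mult_strict_left_mono) auto
        also have "\<dots> \<le> ln (2 + \<mu>) * (c + c)"
          using Lx0 c by (intro mult_right_mono) auto
        also have "\<dots> = r" using l2 by (simp add: c_def)
        finally show "dist (KL \<mu> n g x0) (g x0) < r" by (simp add: dist_real_def)
      qed
    qed
  qed
qed

end
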